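(* Let $N_1,\dots,N_d$ be positive integers. For any integer $s\ge2$ and any $X\subseteq[N_1]\times\cdots\times[N_d]$, \[ \sum_{\mathbf{b}\in\mathbb{Z}^d\setminus\{\mathbf{0}\}}|U^d(X,\mathbf{b},s)|\le|X|\prod_{i=1}^d\Big(4\frac{N_i}{s}+1\Big). \]
   Context: $[N]=\{1,\dots,N\}$. For $\mathbf{b}\in\mathbb{Z}^d\setminus\{\mathbf{0}\}$, points $\mathbf{x},\mathbf{x}'$ are congruent mod $\mathbf{b}$ if $\mathbf{x}-\mathbf{x}'\in\mathbb{Z}\mathbf{b}$. $U^d(X,\mathbf{b},s)$ is the set of $\mathbf{x}\in X$ such that $|\{\mathbf{x}'\in X:\mathbf{x}'\equiv\mathbf{x}\pmod{\mathbf{b}}\}|\ge s$. *)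

theory Defs
  imports "HOL-Analysis.Analysis"
begin

text \<open>Points of Z^d are vectors int^'d, with 'd a finite index type (d = CARD('d)).
  x and x' are congruent mod b if x - x' lies in Z b.\<close>
definition cong_vec :: "int^'d \<Rightarrow> int^'d \<Rightarrow> int^'d \<Rightarrow> bool" where
  "cong_vec b x x' \<longleftrightarrow> (\<exists>k::int. x - x' = k *s b)"

definition U :: "(int^'d) set \<Rightarrow> int^'d \<Rightarrow> nat \<Rightarrow> (int^'d) set" where
  "U X b s = {x \<in> X. card {x' \<in> X. cong_vec b x' x} \<ge> s}"

definition box_grid :: "('d \<Rightarrow> nat) \<Rightarrow> (int^'d) set" where
  "box_grid N = {x. \<forall>i. 1 \<le> x$i \<and> x$i \<le> int (N i)}"

end

theory Submission
  imports Defs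
begin

lemma key:
  fixes N :: "'d::finite \<Rightarrow> nat" and X :: "(int^'d) set" and s :: nat
  assumes "s \<ge> 2" and X: "X \<subseteq> box_grid N" and b: "b \<noteq> 0" and x: "x \<in> U X b s"
  shows "(int s - 1) * \<bar>b$i\<bar> \<le> int (N i) - 1"
proof -
  have fX: "finite X"
  proof -
    have "box_grid N \<subseteq> (\<lambda>f. vec_lambda f) ` (PiE UNIV (\<lambda>i. {1..int (N i)}))"
    proof
      fix y assume "y \<in> box_grid N"
      then have "vec_nth y \<in> PiE UNIV (\<lambda>i. {1..int (N i)})" by (auto simp: box_grid_def)
      then show "y \<in> (\<lambda>f. vec_lambda f) ` (PiE UNIV (\<lambda>i. {1..int (N i)}))"
        by (metis image_eqI vec_nth_inverse)
    qed
    moreover have "finite (PiE UNIV (\<lambda>i. {1..int (N i)}))" by (intro finite_PiE) auto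
    ultimately show ?thesis using X by (meson finite_imageI finite_subset)
  qed
  obtain j where j: "b$j \<noteq> 0" using b by (metis vec_eq_iff zero_index)
  define f where "f = (\<lambda>k::int. x + k *s b)"
  have injf: "inj f" unfolding f_def
  proof
    fix k1 k2 assume "x + k1 *s b = x + k2 *s b"
    then have "k1 * b$j = k2 * b$j" by (metis vector_add_component vector_smult_component add_left_cancel)
    then show "k1 = k2" using j by simp
  qed
  define K where "K = f -` X"
  have fK: "finite K" unfolding K_def using fX injf by (simp add: finite_vimageI)
  have C: "{x' \<in> X. cong_vec b x' x} \<subseteq> f ` K"
  proof
    fix y assume "y \<in> {x' \<in> X. cong_vec b x' x}"
    then obtain k where "y \<in> X" "y - x = k *s b" by (auto simp: cong_vec_def)
    then have "y = f k" "f k \<in> X" unfolding f_def by (auto simp: algebra_simps)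
    then show "y \<in> f ` K" unfolding K_def by auto
  qed
  have "s \<le> card {x' \<in> X. cong_vec b x' x}" using x by (simp add: U_def)
  also have "\<dots> \<le> card (f ` K)" using C fK by (intro card_mono) auto
  also have "\<dots> \<le> card K" by (rule card_image_le[OF fK])
  finally have cK: "s \<le> card K" .
  then have Kne: "K \<noteq> {}" using assms(1) by auto
  have "K \<subseteq> {Min K..Max K}" using fK by auto
  then have "card K \<le> card {Min K..Max K}" by (intro card_mono) auto
  moreover have "Min K \<le> Max K" using fK Kne by simp
  ultimately have "int s \<le> Max K - Min K + 1" using cK by simp
  then have d: "int s - 1 \<le> Max K - Min K" by simp
  have "Max K \<in> K" "Min K \<in> K" using fK Kne by auto
  then have "f (Max K) \<in> X" "f (Min K) \<in> X" unfolding K_def by auto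
  then have "f (Max K) \<in> box_grid N" "f (Min K) \<in> box_grid N" using X by auto
  then have h: "1 \<le> x$i + Max K * b$i" "x$i + Max K * b$i \<le> int (N i)"
      "1 \<le> x$i + Min K * b$i" "x$i + Min K * b$i \<le> int (N i)"
    unfolding f_def box_grid_def by auto
  have "\<bar>(Max K - Min K) * b$i\<bar> \<le> int (N i) - 1" using h by (simp add: algebra_simps)
  moreover have "(int s - 1) * \<bar>b$i\<bar> \<le> (Max K - Min K) * \<bar>b$i\<bar>"
    using d by (intro mult_right_mono) auto
  moreover have "Max K - Min K \<ge> 0" using fK Kne by simp
  ultimately show ?thesis by (simp add: abs_mult)
qed

theorem lemma2p3:
  fixes N :: "'d::finite \<Rightarrow> nat" and X :: "(int^'d) set" and s :: nat
  assumes "\<forall>i. N i > 0" and "s \<ge> 2" and "X \<subseteq> box_grid N"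
  shows "finite {b. b \<noteq> 0 \<and> U X b s \<noteq> {}} \<and>
    real (\<Sum>b\<in>{b. b \<noteq> 0 \<and> U X b s \<noteq> {}}. card (U X b s))
      \<le> real (card X) * (\<Prod>i\<in>UNIV. 4 * real (N i) / real s + 1)"
proof -
  define m where "m = (\<lambda>i. (int (N i) - 1) div (int s - 1))"
  define B where "B = (\<lambda>f. vec_lambda f) ` (PiE UNIV (\<lambda>i. {- m i..m i}))"
  define S where "S = {b. b \<noteq> 0 \<and> U X b s \<noteq> {}}"
  have spos: "int s - 1 > 0" using assms(2) by simp
  have SB: "S \<subseteq> B"
  proof
    fix b assume "b \<in> S"
    then obtain x where b0: "b \<noteq> 0" and x: "x \<in> U X b s" unfolding S_def by auto
    have "\<bar>b$i\<bar> \<le> m i" for i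
    proof -
      have "(int s - 1) * \<bar>b$i\<bar> \<le> int (N i) - 1" by (rule key[OF assms(2) assms(3) b0 x])
      then have "\<bar>b$i\<bar> * (int s - 1) \<le> int (N i) - 1" by (simp add: mult.commute)
      moreover have "\<bar>b$i\<bar> = (\<bar>b$i\<bar> * (int s - 1)) div (int s - 1)" using spos by simp
      ultimately show ?thesis unfolding m_def using spos by (metis zdiv_mono1)
    qed
    then have "vec_nth b \<in> PiE UNIV (\<lambda>i. {- m i..m i})" by (auto simp: abs_le_iff) (metis minus_le_iff)
    then show "b \<in> B" unfolding B_def by (metis image_eqI vec_nth_inverse)
  qed
  have fB: "finite B" unfolding B_def by (intro finite_imageI finite_PiE) auto
  have cB: "card B = (\<Prod>i\<in>UNIV. nat (2 * m i + 1))"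
  proof -
    have "inj_on (\<lambda>f. vec_lambda f) (PiE UNIV (\<lambda>i. {- m i..m i}))"
      by (rule inj_onI) (simp add: vec_lambda_inject)
    then have "card B = card (PiE UNIV (\<lambda>i. {- m i..m i}))" unfolding B_def by (rule card_image)
    also have "\<dots> = (\<Prod>i\<in>UNIV. card {- m i..m i})" by (simp add: card_PiE)
    finally show ?thesis by simp
  qed
  have fX: "finite X"
  proof -
    have "box_grid N \<subseteq> (\<lambda>f. vec_lambda f) ` (PiE UNIV (\<lambda>i. {1..int (N i)}))"
    proof
      fix y assume "y \<in> box_grid N"
      then have "vec_nth y \<in> PiE UNIV (\<lambda>i. {1..int (N i)})" by (auto simp: box_grid_def)
      then show "y \<in> (\<lambda>f. vec_lambda f) ` (PiE UNIV (\<lambda>i. {1..int (N i)}))"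
        by (metis image_eqI vec_nth_inverse)
    qed
    moreover have "finite (PiE UNIV (\<lambda>i. {1..int (N i)}))" by (intro finite_PiE) auto
    ultimately show ?thesis using assms(3) by (meson finite_imageI finite_subset)
  qed
  have fS: "finite S" using SB fB finite_subset by blast
  have "(\<Sum>b\<in>S. card (U X b s)) \<le> (\<Sum>b\<in>S. card X)"
    by (intro sum_mono card_mono fX) (auto simp: U_def)
  also have "\<dots> = card S * card X" by simp
  also have "\<dots> \<le> card B * card X" using SB fB by (intro mult_right_mono card_mono) auto
  finally have L1: "real (\<Sum>b\<in>S. card (U X b s)) \<le> real (card X) * real (card B)"
    by (metis mult.commute of_nat_le_iff of_nat_mult)
  have L2: "real (card B) \<le> (\<Prod>i\<in>UNIV. 4 * real (N i) / real s + 1)"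
  proof -
    have "real (card B) = (\<Prod>i\<in>UNIV. real (nat (2 * m i + 1)))" unfolding cB by simp
    also have "\<dots> \<le> (\<Prod>i\<in>UNIV. 4 * real (N i) / real s + 1)"
    proof (rule prod_mono, rule conjI)
      fix i :: 'd
      have m0: "m i \<ge> 0" unfolding m_def using assms(1) spos by (simp add: pos_imp_zdiv_nonneg_iff)
      have m1: "m i * (int s - 1) \<le> int (N i) - 1" unfolding m_def
        using div_mult_mod_eq[of "int (N i) - 1" "int s - 1"] pos_mod_sign[OF spos, of "int (N i) - 1"]
        by linarith
      have m2: "m i \<le> int (N i) - 1"
      proof -
        have "m i * 1 \<le> m i * (int s - 1)" using m0 spos by (intro mult_left_mono) auto
        then show ?thesis using m1 by simp
      qed
      have "m i * int s \<le> 2 * int (N i)" using m1 m2 by (simp add: algebra_simps)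
      then have "real_of_int (m i) * real s \<le> 2 * real (N i)"
        by (metis of_int_le_iff of_int_mult of_int_of_nat_eq of_int_numeral)
      then have "real_of_int (m i) \<le> 2 * real (N i) / real s"
        using assms(2) by (simp add: pos_le_divide_eq)
      moreover have "real (nat (2 * m i + 1)) = 2 * real_of_int (m i) + 1" using m0 by simp
      ultimately show "real (nat (2 * m i + 1)) \<le> 4 * real (N i) / real s + 1" by simp
    qed simp
    finally show ?thesis .
  qed
  have "real (card X) * real (card B) \<le> real (card X) * (\<Prod>i\<in>UNIV. 4 * real (N i) / real s + 1)"
    using L2 by (intro mult_left_mono) auto
  then show ?thesis using fS L1 unfolding S_def by linarith
qed

end
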